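(* For all positive integers $n,t$ and $q\ge2$, the Hamming graph $H(tn,q)$ covers the multigraph $tH(n,q)$.
   Context: The Hamming graph $H(n,q)$ has vertex set $\mathbb{Z}_q^n$, two vertices adjacent iff they differ in exactly one coordinate. For a multigraph $G$ and positive integer $t$, $tG$ denotes the multigraph in which every edge and loop of $G$ has multiplicity $t$ times its multiplicity in $G$. A multigraph $G=(V,E)$ covers a multigraph $H=(U,W)$ if there is a surjective map $\varphi:V\to U$ such that for every $v\in V$ the multiset $\{\varphi(u): (u,v)\in E\}$ equals the multiset of neighbours of $\varphi(v)$ in $H$ (with multiplicities). *)

theory Defs
  imports Main "HOL-Library.Multiset"
begin

text \<open>A (finite) multigraph on a vertex set V is given by a symmetric multiplicity
  function m :: 'a => 'a => nat; m u v is the number of edges between u and v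
  (m v v the number of loops at v).\<close>

definition nbr_mset :: "'a set \<Rightarrow> ('a \<Rightarrow> 'a \<Rightarrow> nat) \<Rightarrow> 'a \<Rightarrow> 'a multiset" where
  "nbr_mset V m v = (\<Sum>u\<in>V. replicate_mset (m u v) u)"

definition covers_via ::
  "'a set \<Rightarrow> ('a \<Rightarrow> 'a \<Rightarrow> nat) \<Rightarrow> 'b set \<Rightarrow> ('b \<Rightarrow> 'b \<Rightarrow> nat) \<Rightarrow> ('a \<Rightarrow> 'b) \<Rightarrow> bool" where
  "covers_via V mG U mH \<phi> \<longleftrightarrow>
     \<phi> ` V = U \<and> (\<forall>v\<in>V. image_mset \<phi> (nbr_mset V mG v) = nbr_mset U mH (\<phi> v))"

definition covers ::
  "'a set \<Rightarrow> ('a \<Rightarrow> 'a \<Rightarrow> nat) \<Rightarrow> 'b set \<Rightarrow> ('b \<Rightarrow> 'b \<Rightarrow> nat) \<Rightarrow> bool" where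
  "covers V mG U mH \<longleftrightarrow> (\<exists>\<phi>. covers_via V mG U mH \<phi>)"

text \<open>Hamming graph H(n,q): vertices Z_q^n, represented as functions nat => nat with
  values < q on {0..<n} and 0 elsewhere.\<close>
definition hamming_verts :: "nat \<Rightarrow> nat \<Rightarrow> (nat \<Rightarrow> nat) set" where
  "hamming_verts n q = {x. (\<forall>i<n. x i < q) \<and> (\<forall>i\<ge>n. x i = 0)}"

definition hamming_mult :: "nat \<Rightarrow> (nat \<Rightarrow> nat) \<Rightarrow> (nat \<Rightarrow> nat) \<Rightarrow> nat" where
  "hamming_mult n x y = (if card {i. i < n \<and> x i \<noteq> y i} = 1 then 1 else 0)"

definition scale_mult :: "nat \<Rightarrow> ('a \<Rightarrow> 'a \<Rightarrow> nat) \<Rightarrow> 'a \<Rightarrow> 'a \<Rightarrow> nat" where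
  "scale_mult t m x y = t * m x y"

end

theory Submission
  imports Defs
begin

lemma hv_finite: "finite (hamming_verts n q)"
proof -
  have "inj_on (\<lambda>x. map x [0..<n]) (hamming_verts n q)"
  proof (rule inj_onI)
    fix x y assume x: "x \<in> hamming_verts n q" and y: "y \<in> hamming_verts n q"
      and e: "map x [0..<n] = map y [0..<n]"
    show "x = y"
    proof
      fix i show "x i = y i"
      proof (cases "i < n")
        case True then show ?thesis using e by (simp add: map_eq_conv)
      next
        case False then show ?thesis using x y by (simp add: hamming_verts_def)
      qed
    qed
  qed
  moreover have "(\<lambda>x. map x [0..<n]) ` hamming_verts n q \<subseteq> {xs. set xs \<subseteq> {..<q} \<and> length xs = n}"
    by (auto simp: hamming_verts_def)
  moreover have "finite {xs. set xs \<subseteq> {..<q} \<and> length xs = n}"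
    by (rule finite_lists_length_eq) simp
  ultimately show ?thesis using finite_imageD finite_subset by blast
qed

lemma count_lhs:
  assumes "finite V"
  shows "count (image_mset f (nbr_mset V m v)) z = (\<Sum>u\<in>V. if f u = z then m u v else 0)"
  using assms unfolding nbr_mset_def
  by (induct V rule: finite_induct) (simp_all add: image_mset_union)

lemma count_rhs:
  assumes "finite U"
  shows "count (nbr_mset U m v) z = (if z \<in> U then m z v else 0)"
  unfolding nbr_mset_def count_sum count_replicate_mset
  using assms by (simp add: sum.delta')

lemma ham_adj:
  assumes "x \<in> hamming_verts N q" "u \<in> hamming_verts N q"
  shows "hamming_mult N u x = (if (\<exists>k<N. u k \<noteq> x k \<and> u = x(k := u k)) then 1 else 0)"
proof -
  have "card {i. i < N \<and> u i \<noteq> x i} = 1 \<longleftrightarrow> (\<exists>k<N. u k \<noteq> x k \<and> u = x(k := u k))"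
  proof
    assume "card {i. i < N \<and> u i \<noteq> x i} = 1"
    then obtain k where k: "{i. i < N \<and> u i \<noteq> x i} = {k}" by (auto simp: card_1_singleton_iff)
    have "u = x(k := u k)"
    proof
      fix i show "u i = (x(k := u k)) i"
      proof (cases "i < N")
        case True then show ?thesis using k by auto
      next
        case False then show ?thesis using assms by (auto simp: hamming_verts_def)
      qed
    qed
    then show "\<exists>k<N. u k \<noteq> x k \<and> u = x(k := u k)" using k by auto
  next
    assume "\<exists>k<N. u k \<noteq> x k \<and> u = x(k := u k)"
    then obtain k where "k<N" "u k \<noteq> x k" "u = x(k := u k)" by auto
    then have "{i. i < N \<and> u i \<noteq> x i} = {k}" by (auto, metis fun_upd_other)
    then show "card {i. i < N \<and> u i \<noteq> x i} = 1" by simp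
  qed
  then show ?thesis by (simp add: hamming_mult_def)
qed



lemma m2: "w < q \<Longrightarrow> b < q \<Longrightarrow> xk < q \<Longrightarrow> z < q \<Longrightarrow> (w + b + q - xk) mod (q::nat) = z \<Longrightarrow> b = (xk + z + q - w) mod q"
  by (smt (verit, ccfv_threshold) add.assoc add.commute
    add_diff_cancel_left' add_diff_inverse_nat mod_add_right_eq
    mod_add_self1 mod_less order_less_imp_not_less)

lemma m3: "w < q \<Longrightarrow> xk < q \<Longrightarrow> z < q \<Longrightarrow> (w + (xk + z + q - w) mod q + q - xk) mod (q::nat) = z"
  by (smt (verit, ccfv_SIG) Nat.add_diff_assoc add.commute
    add_diff_cancel_left' le_add2 le_add_diff_inverse le_trans
    mod_add_right_eq mod_add_self2 mod_if nless_le)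

lemma m1: "w < q \<Longrightarrow> b < q \<Longrightarrow> xk < q \<Longrightarrow> b \<noteq> xk \<Longrightarrow> (w + b + q - xk) mod (q::nat) \<noteq> w"
proof
  assume h: "w < q" "b < q" "xk < q" "b \<noteq> xk" "(w + b + q - xk) mod q = w"
  then have "b = (xk + w + q - w) mod q" using m2 by blast
  also have "\<dots> = xk" using h by simp
  finally show False using h by simp
qed

definition phi :: "nat \<Rightarrow> nat \<Rightarrow> nat \<Rightarrow> (nat \<Rightarrow> nat) \<Rightarrow> nat \<Rightarrow> nat" where
  "phi n t q x i = (if i < n then (\<Sum>j<t. x (i + j*n)) mod q else 0)"

lemma phi_in: "q > 0 \<Longrightarrow> phi n t q x \<in> hamming_verts n q"
  unfolding phi_def hamming_verts_def by simp

lemma phi_id: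
  assumes "y \<in> hamming_verts n q" "t > 0" "q > 0"
  shows "y \<in> hamming_verts (t*n) q" "phi n t q y = y"
proof -
  have "n \<le> t*n" using assms(2) by simp
  then show "y \<in> hamming_verts (t*n) q"
    unfolding hamming_verts_def
  proof (intro CollectI conjI allI impI)
    fix i assume "i < t*n"
    show "y i < q"
    proof (cases "i < n")
      case True then show ?thesis using assms(1) unfolding hamming_verts_def by blast
    next
      case False then have "y i = 0" using assms(1) unfolding hamming_verts_def by simp
      then show ?thesis using assms(3) by simp
    qed
  next
    fix i assume "t*n \<le> i"
    then have "n \<le> i" using \<open>n \<le> t*n\<close> by linarith
    then show "y i = 0" using assms(1) unfolding hamming_verts_def by blast
  qed
  show "phi n t q y = y"
  proof
    fix i show "phi n t q y i = y i"
    proof (cases "i < n")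
      case True
      have "(\<Sum>j<t. y (i + j*n)) = (\<Sum>j\<in>{0}. y (i + j*n))"
      proof (rule sum.mono_neutral_right)
        show "\<forall>j\<in>{..<t} - {0}. y (i + j*n) = 0"
        proof
          fix j assume "j \<in> {..<t} - {0}"
          then have "n \<le> j*n" by simp
          then have "n \<le> i + j*n" by linarith
          then show "y (i + j*n) = 0" using assms(1) unfolding hamming_verts_def by blast
        qed
      qed (use assms in auto)
      then show ?thesis using True assms(1) by (simp add: phi_def hamming_verts_def)
    next
      case False then show ?thesis using assms(1) by (simp add: phi_def hamming_verts_def)
    qed
  qed
qed

lemma phi_upd:
  assumes "n > 0" "k < t*n" "x k < q"
  shows "phi n t q (x(k := a)) = (phi n t q x)(k mod n := (phi n t q x (k mod n) + a + q - x k) mod q)"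
proof
  fix i
  define j0 where "j0 = k div n"
  have k: "k mod n + j0 * n = k" unfolding j0_def by simp
  have j0: "j0 < t" using assms unfolding j0_def by (simp add: less_mult_imp_div_less)
  show "phi n t q (x(k := a)) i = ((phi n t q x)(k mod n := (phi n t q x (k mod n) + a + q - x k) mod q)) i"
  proof (cases "i = k mod n")
    case False
    show ?thesis
    proof (cases "i < n")
      case True
      have ne: "\<And>j. i + j*n \<noteq> k"
      proof
        fix j assume "i + j*n = k"
        then have "k mod n = i" using True by auto
        then show False using False by simp
      qed
      have "(\<Sum>j<t. (x(k:=a)) (i + j*n)) = (\<Sum>j<t. x (i + j*n))"
        by (rule sum.cong) (use ne in auto)
      then show ?thesis using False True unfolding phi_def by simp
    next
      case f2: False
      then show ?thesis using False unfolding phi_def by simp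
    qed
  next
    case True
    have i: "i < n" using True assms by simp
    define R where "R = (\<Sum>j\<in>{..<t}-{j0}. x (i + j*n))"
    have R': "(\<Sum>j\<in>{..<t}-{j0}. (x(k:=a)) (i + j*n)) = R"
      unfolding R_def
    proof (rule sum.cong)
      fix j assume "j \<in> {..<t}-{j0}"
      have "i + j*n \<noteq> k"
      proof
        assume "i + j*n = k"
        then have "j*n = j0*n" using k True by (metis add_left_cancel)
        then have "j = j0" using assms(1) by simp
        then show False using \<open>j \<in> {..<t}-{j0}\<close> by simp
      qed
      then show "(x(k:=a)) (i + j*n) = x (i + j*n)" by simp
    qed simp
    have s1: "(\<Sum>j<t. (x(k:=a)) (i + j*n)) = a + R"
      using sum.remove[of "{..<t}" j0 "\<lambda>j. (x(k:=a)) (i + j*n)"] j0 R' True k by simp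
    have s2: "(\<Sum>j<t. x (i + j*n)) = x k + R"
      using sum.remove[of "{..<t}" j0 "\<lambda>j. x (i + j*n)"] j0 True k unfolding R_def by simp
    have "((x k + R) mod q + a + q - x k) mod q = ((x k + R) mod q + (a + q - x k)) mod q"
      using assms(3) by (metis add.assoc Nat.add_diff_assoc less_imp_le trans_le_add2)
    also have "\<dots> = (x k + R + (a + q - x k)) mod q" by (simp add: mod_add_left_eq)
    also have "\<dots> = (a + R + q) mod q" using assms(3) by (simp add: ac_simps)
    also have "\<dots> = (a + R) mod q" by simp
    finally have calc: "((x k + R) mod q + a + q - x k) mod q = (a + R) mod q" .
    have p1: "phi n t q (x(k:=a)) i = (a+R) mod q" using s1 i unfolding phi_def by simp
    have p2: "phi n t q x i = (x k + R) mod q" using s2 i unfolding phi_def by simp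
    have "((phi n t q x)(k mod n := (phi n t q x (k mod n) + a + q - x k) mod q)) i = (phi n t q x (k mod n) + a + q - x k) mod q" using True by (simp only: fun_upd_same)
    also have "\<dots> = ((x k + R) mod q + a + q - x k) mod q" using p2 True by (simp only:)
    also have "\<dots> = (a+R) mod q" by (rule calc)
    also have "\<dots> = phi n t q (x(k:=a)) i" using p1 by (simp only:)
    finally show ?thesis by (rule sym)
  qed
qed



lemma nb:
  assumes "x \<in> hamming_verts N q" "u \<in> hamming_verts N q" "hamming_mult N u x = 1"
  obtains k where "k < N" "u k \<noteq> x k" "u = x(k := u k)"
  using ham_adj[OF assms(1,2)] assms(3) by (auto split: if_splits)

lemma count_main:
  assumes n: "n > 0" and q: "q > 0" and x: "x \<in> hamming_verts (t*n) q"
    and z: "z \<in> hamming_verts n q"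
  shows "card {u \<in> hamming_verts (t*n) q. phi n t q u = z \<and> hamming_mult (t*n) u x = 1}
         = t * hamming_mult n z (phi n t q x)"
proof -
  define V where "V = hamming_verts (t*n) q"
  define w where "w = phi n t q x"
  define S where "S = {u \<in> V. phi n t q u = z \<and> hamming_mult (t*n) u x = 1}"
  have wU: "w \<in> hamming_verts n q" unfolding w_def using phi_in q by blast
  have wq: "\<And>i. w i < q" using wU q unfolding hamming_verts_def by (metis (mono_tags, lifting) mem_Collect_eq not_less)
  have zq: "\<And>i. z i < q" using z q unfolding hamming_verts_def by (metis (mono_tags, lifting) mem_Collect_eq not_less)
  have xq: "\<And>i. x i < q" using x q unfolding hamming_verts_def by (metis (mono_tags, lifting) mem_Collect_eq not_less)
  have key: "\<exists>k. k < t*n \<and> u = x(k := u k) \<and> u k < q \<and> u k \<noteq> x k \<and>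
      phi n t q u = w(k mod n := (w (k mod n) + u k + q - x k) mod q) \<and>
      (w (k mod n) + u k + q - x k) mod q \<noteq> w (k mod n)" if u: "u \<in> S" for u
  proof -
    have uV: "u \<in> V" and h: "hamming_mult (t*n) u x = 1" using u unfolding S_def by auto
    obtain k where k: "k < t*n" "u k \<noteq> x k" "u = x(k := u k)"
      using nb[OF x uV[unfolded V_def] h] by blast
    have uq: "u k < q" using uV k(1) unfolding V_def hamming_verts_def by blast
    have "phi n t q u = w(k mod n := (w (k mod n) + u k + q - x k) mod q)"
      unfolding w_def by (subst k(3), rule phi_upd[OF n k(1) xq])
    moreover have "(w (k mod n) + u k + q - x k) mod q \<noteq> w (k mod n)"
      using m1[OF wq uq xq k(2)] .
    ultimately show ?thesis using k uq by blast
  qed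
  show ?thesis
  proof (cases "hamming_mult n z w = 1")
    case False
    have "S = {}"
    proof (rule ccontr)
      assume "S \<noteq> {}"
      then obtain u where u: "u \<in> S" by blast
      then have zz: "z = phi n t q u" unfolding S_def by simp
      obtain k where "phi n t q u = w(k mod n := (w (k mod n) + u k + q - x k) mod q)"
        "(w (k mod n) + u k + q - x k) mod q \<noteq> w (k mod n)"
        using key[OF u] by blast
      moreover have "k mod n < n" using n by simp
      ultimately have "\<exists>i<n. z i \<noteq> w i \<and> z = w(i := z i)" using zz
        by (intro exI[of _ "k mod n"]) auto
      then have "hamming_mult n z w = 1" using ham_adj[OF wU z] by simp
      then show False using False by simp
    qed
    moreover have "hamming_mult n z w = 0" using ham_adj[OF wU z] False by (simp split: if_splits)
    ultimately have "card S = t * hamming_mult n z w" by simp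
    then show ?thesis unfolding S_def V_def w_def .
  next
    case True
    then obtain i where i: "i < n" "z i \<noteq> w i" "z = w(i := z i)"
    proof -
      have "hamming_mult n z w = (if (\<exists>k<n. z k \<noteq> w k \<and> z = w(k := z k)) then 1 else 0)"
        by (rule ham_adj[OF wU z])
      then have "\<exists>k<n. z k \<noteq> w k \<and> z = w(k := z k)" using True by presburger
      then show ?thesis using that by blast
    qed
    define beta where "beta k = (x k + z i + q - w i) mod q" for k
    define K where "K = {k. k < t*n \<and> k mod n = i}"
    define f where "f k = x(k := beta k)" for k
    have bne: "beta k \<noteq> x k" for k
      unfolding beta_def using m1[OF xq zq wq i(2)] .
    have bq: "beta k < q" for k unfolding beta_def using q by simp
    have Kim: "K = (\<lambda>j. i + j*n) ` {..<t}"
    proof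
      show "K \<subseteq> (\<lambda>j. i + j*n) ` {..<t}"
      proof
        fix k assume "k \<in> K"
        then have k: "k < t*n" "k mod n = i" unfolding K_def by auto
        have "k = i + (k div n) * n" using k(2) div_mult_mod_eq[of k n] by linarith
        moreover have "k div n < t" using k(1) by (simp add: less_mult_imp_div_less)
        ultimately show "k \<in> (\<lambda>j. i + j*n) ` {..<t}" by blast
      qed
    next
      show "(\<lambda>j. i + j*n) ` {..<t} \<subseteq> K"
      proof
        fix k assume "k \<in> (\<lambda>j. i + j*n) ` {..<t}"
        then obtain j where j: "j < t" "k = i + j*n" by blast
        have "Suc j * n \<le> t * n" using j(1) by (simp only: mult_le_mono1 Suc_leI)
        then have "k < t*n" using j(2) i(1) by simp
        moreover have "k mod n = i" using j(2) i(1) by simp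
        ultimately show "k \<in> K" unfolding K_def by simp
      qed
    qed
    have cardK: "card K = t"
    proof -
      have "inj_on (\<lambda>j. i + j*n) {..<t}" using n by (auto simp: inj_on_def)
      then show ?thesis unfolding Kim by (simp add: card_image)
    qed
    have injf: "inj_on f K"
    proof (rule inj_onI)
      fix k1 k2 assume "k1 \<in> K" "k2 \<in> K" and e: "f k1 = f k2"
      show "k1 = k2"
      proof (rule ccontr)
        assume ne: "k1 \<noteq> k2"
        have "f k1 k1 = beta k1" unfolding f_def by simp
        moreover have "f k2 k1 = x k1" unfolding f_def using ne by simp
        ultimately show False using e bne by metis
      qed
    qed
    have SK: "S = f ` K"
    proof
      show "f ` K \<subseteq> S"
      proof
        fix u assume "u \<in> f ` K"
        then obtain k where kK: "k \<in> K" and uf: "u = f k" by blast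
        have k: "k < t*n" "k mod n = i" using kK unfolding K_def by auto
        have uV: "u \<in> V" unfolding V_def hamming_verts_def uf f_def
          using x bq k(1) unfolding hamming_verts_def by auto
        have "\<exists>k'<t*n. u k' \<noteq> x k' \<and> u = x(k' := u k')"
          using k(1) bne unfolding uf f_def by (intro exI[of _ k]) auto
        then have h: "hamming_mult (t*n) u x = 1"
          using ham_adj[OF x uV[unfolded V_def]] by simp
        have "phi n t q u = w(i := (w i + beta k + q - x k) mod q)"
          unfolding uf f_def w_def using phi_upd[OF n k(1) xq, where a="beta k"] k(2) by simp
        also have "(w i + beta k + q - x k) mod q = z i"
          unfolding beta_def by (rule m3[OF wq xq zq])
        finally have "phi n t q u = z" using i(3) by simp
        then show "u \<in> S" unfolding S_def using uV h by simp
      qed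
    next
      show "S \<subseteq> f ` K"
      proof
        fix u assume u: "u \<in> S"
        then have zz: "z = phi n t q u" unfolding S_def by simp
        obtain k where k: "k < t*n" "u = x(k := u k)" "u k < q"
          and ph: "phi n t q u = w(k mod n := (w (k mod n) + u k + q - x k) mod q)"
          and c: "(w (k mod n) + u k + q - x k) mod q \<noteq> w (k mod n)"
          using key[OF u] by blast
        have ki: "k mod n = i"
        proof (rule ccontr)
          assume "k mod n \<noteq> i"
          then have "z (k mod n) = w (k mod n)" using i(3) by (metis fun_upd_other)
          moreover have "z (k mod n) = (w (k mod n) + u k + q - x k) mod q" using zz ph by simp
          ultimately show False using c by simp
        qed
        have "(w i + u k + q - x k) mod q = z i" using zz ph ki by simp
        then have "u k = beta k" unfolding beta_def using m2[OF wq k(3) xq zq] by blast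
        then have "u = f k" unfolding f_def using k(2) by simp
        moreover have "k \<in> K" unfolding K_def using k(1) ki by simp
        ultimately show "u \<in> f ` K" by blast
      qed
    qed
    have "card S = t" unfolding SK using card_image[OF injf] cardK by simp
    then have "card S = t * hamming_mult n z w" using True by simp
    then show ?thesis unfolding S_def V_def w_def .
  qed
qed



theorem proposition6:
  fixes n t q :: nat
  assumes "n > 0" and "t > 0" and "q \<ge> 2"
  shows "covers (hamming_verts (t * n) q) (hamming_mult (t * n))
                (hamming_verts n q) (scale_mult t (hamming_mult n))"
  unfolding covers_def
proof (intro exI[of _ "phi n t q"])
  have q: "q > 0" using assms(3) by simp
  define V where "V = hamming_verts (t * n) q"
  define U where "U = hamming_verts n q"
  have img: "phi n t q ` V = U"
  proof
    show "phi n t q ` V \<subseteq> U" unfolding U_def using phi_in[OF q] by blast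
    show "U \<subseteq> phi n t q ` V"
    proof
      fix y assume y: "y \<in> U"
      have "y \<in> V" "phi n t q y = y" using phi_id[OF y[unfolded U_def] assms(2) q] unfolding V_def by auto
      then show "y \<in> phi n t q ` V" by (metis image_eqI)
    qed
  qed
  have nbr: "image_mset (phi n t q) (nbr_mset V (hamming_mult (t * n)) v) =
             nbr_mset U (scale_mult t (hamming_mult n)) (phi n t q v)" if v: "v \<in> V" for v
  proof (rule multiset_eqI)
    fix z
    have fV: "finite V" unfolding V_def by (rule hv_finite)
    have fU: "finite U" unfolding U_def by (rule hv_finite)
    have bin: "\<And>u. u \<in> V \<Longrightarrow> hamming_mult (t*n) u v = (if hamming_mult (t*n) u v = 1 then 1 else 0)"
      by (simp add: hamming_mult_def)
    have "count (image_mset (phi n t q) (nbr_mset V (hamming_mult (t * n)) v)) z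
        = (\<Sum>u\<in>V. if phi n t q u = z then hamming_mult (t*n) u v else 0)"
      by (rule count_lhs[OF fV])
    also have "\<dots> = (\<Sum>u\<in>V. if phi n t q u = z \<and> hamming_mult (t*n) u v = 1 then 1 else 0)"
      by (rule sum.cong) (auto simp: hamming_mult_def)
    also have "\<dots> = card {u\<in>V. phi n t q u = z \<and> hamming_mult (t*n) u v = 1}"
      using sum.inter_filter[OF fV, of "\<lambda>_. 1::nat" "\<lambda>u. phi n t q u = z \<and> hamming_mult (t*n) u v = 1"]
      by simp
    also have "\<dots> = (if z \<in> U then scale_mult t (hamming_mult n) z (phi n t q v) else 0)"
    proof (cases "z \<in> U")
      case True
      then show ?thesis using count_main[OF assms(1) q v[unfolded V_def] True[unfolded U_def]]
        unfolding V_def scale_mult_def by simp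
    next
      case False
      have "{u\<in>V. phi n t q u = z \<and> hamming_mult (t*n) u v = 1} = {}"
        using False img by blast
      then have "card {u\<in>V. phi n t q u = z \<and> hamming_mult (t*n) u v = 1} = 0" by (simp only: card.empty)
      then show ?thesis using False by (simp only: if_False)
    qed
    also have "\<dots> = count (nbr_mset U (scale_mult t (hamming_mult n)) (phi n t q v)) z"
      by (rule count_rhs[OF fU, symmetric])
    finally show "count (image_mset (phi n t q) (nbr_mset V (hamming_mult (t * n)) v)) z =
      count (nbr_mset U (scale_mult t (hamming_mult n)) (phi n t q v)) z" .
  qed
  show "covers_via (hamming_verts (t * n) q) (hamming_mult (t * n)) (hamming_verts n q)
          (scale_mult t (hamming_mult n)) (phi n t q)"
    unfolding covers_via_def using img nbr unfolding V_def U_def by blast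
qed


end
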